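(* Let $P_E$ be the set of all primitive Eisenstein triples, i.e. triples $(a,b,c) \in \mathbb{Z}^3_{\geq 0} \setminus \{(0,0,0)\}$ with $a^2 - ab + b^2 = c^2$, $a \leq b$ and $\gcd(a,b,c)=1$. Let $G_E = \langle U, M_1, M_2, M_3 \rangle$ be the non-commutative monoid generated by the matrices $$U = \begin{bmatrix} -1&1&0 \\ 0&1&0 \\ 0&0&1 \end{bmatrix},\quad M_1 = \begin{bmatrix} 3 & -4 & 4 \\ 7 & -7 & 8 \\ 6 & -6 & 7 \end{bmatrix},\quad M_2 = \begin{bmatrix} -4 & 3 & 4 \\ -7 & 7 & 8 \\ -6 & 6 & 7 \end{bmatrix},\quad M_3 = \begin{bmatrix} 1 & 3 & 4 \\ 0 & 7 & 8 \\ 0 & 6 & 7 \end{bmatrix}$$ in $\operatorname{GL}_3(\mathbb{Z})$. Then $G_E$ acts on the set $P_E$ by left multiplication: $$M(a,b,c) = M \begin{bmatrix} a \\ b \\ c \end{bmatrix} \in P_E$$ for every $M \in G_E$ and $(a,b,c) \in P_E$.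
   Context: An Eisenstein triple is a solution $(a,b,c) \in \mathbb{Z}^3_{\geq 0}\setminus\{(0,0,0)\}$ of $a^2-ab+b^2=c^2$; it is primitive if additionally $a \leq b$ and $\gcd(a,b,c)=1$. Note $U(a,b,c) = (b-a,b,c)$. *)

theory Defs
  imports "HOL-Analysis.Analysis"
begin

definition eisenstein_triple :: "int ^ 3 \<Rightarrow> bool" where
  "eisenstein_triple v \<longleftrightarrow>
     v $ 1 \<ge> 0 \<and> v $ 2 \<ge> 0 \<and> v $ 3 \<ge> 0 \<and> v \<noteq> 0 \<and>
     (v $ 1)^2 - (v $ 1) * (v $ 2) + (v $ 2)^2 = (v $ 3)^2"

definition primitive_eisenstein_triples :: "(int ^ 3) set" where
  "primitive_eisenstein_triples =
     {v. eisenstein_triple v \<and> v $ 1 \<le> v $ 2 \<and> gcd (gcd (v $ 1) (v $ 2)) (v $ 3) = 1}"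

definition U_E :: "int ^ 3 ^ 3" where
  "U_E = vector [vector [-1, 1, 0], vector [0, 1, 0], vector [0, 0, 1]]"

definition M1_E :: "int ^ 3 ^ 3" where
  "M1_E = vector [vector [3, -4, 4], vector [7, -7, 8], vector [6, -6, 7]]"

definition M2_E :: "int ^ 3 ^ 3" where
  "M2_E = vector [vector [-4, 3, 4], vector [-7, 7, 8], vector [-6, 6, 7]]"

definition M3_E :: "int ^ 3 ^ 3" where
  "M3_E = vector [vector [1, 3, 4], vector [0, 7, 8], vector [0, 6, 7]]"

inductive_set G_E :: "(int ^ 3 ^ 3) set" where
  id_in: "mat 1 \<in> G_E"
| mult_in: "A \<in> G_E \<Longrightarrow> B \<in> {U_E, M1_E, M2_E, M3_E} \<Longrightarrow> A ** B \<in> G_E"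

end

theory Submission
  imports Defs
begin

lemma vec3_eq: "(v::int^3) = vector [v$1, v$2, v$3]"
  by (simp add: vec_eq_iff forall_3)

lemma P_iff: "vector [x,y,z] \<in> primitive_eisenstein_triples \<longleftrightarrow>
   (x::int) \<ge> 0 \<and> y \<ge> 0 \<and> z \<ge> 0 \<and> \<not>(x=0\<and>y=0\<and>z=0) \<and> x^2-x*y+y^2=z^2 \<and> x \<le> y \<and> gcd (gcd x y) z = 1"
  by (auto simp: primitive_eisenstein_triples_def eisenstein_triple_def vec_eq_iff forall_3)

lemma mv: "(vector [vector [a11,a12,a13], vector [a21,a22,a23], vector [a31,a32,a33]] :: int^3^3) *v vector [x,y,z]
  = vector [a11*x+a12*y+a13*z, a21*x+a22*y+a23*z, a31*x+a32*y+a33*z]"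
  by (simp add: vec_eq_iff forall_3 matrix_vector_mult_def sum_3)

lemma gcd1:
  fixes a b c x y z :: int
  assumes "gcd (gcd a b) c = 1"
    and "gcd (gcd x y) z dvd a" "gcd (gcd x y) z dvd b" "gcd (gcd x y) z dvd c"
  shows "gcd (gcd x y) z = 1"
proof -
  have "gcd (gcd x y) z dvd 1" using assms by (metis gcd_greatest)
  then show ?thesis by simp
qed

lemma lin:
  fixes g x y z t p q r :: int
  assumes "gcd (gcd x y) z = g" "t = p*x+q*y+r*z"
  shows "g dvd t"
proof -
  have "g dvd x" "g dvd y" "g dvd z" using assms(1) by (meson dvd_trans gcd_dvd1 gcd_dvd2)+
  then show ?thesis unfolding assms(2) by (simp add: dvd_add dvd_mult)
qed

lemma sqle: "(0::int) \<le> x \<Longrightarrow> x^2 - y^2 = d \<Longrightarrow> 0 \<le> d \<Longrightarrow> y \<le> x"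
  by (rule power2_le_imp_le) auto

lemma gen_ok:
  assumes "B \<in> {U_E, M1_E, M2_E, M3_E}" and "v \<in> primitive_eisenstein_triples"
  shows "B *v v \<in> primitive_eisenstein_triples"
proof -
  obtain a b c where v: "v = vector [a,b,c]" using vec3_eq by blast
  have h: "a \<ge> 0" "b \<ge> 0" "c \<ge> 0" "\<not>(a=0\<and>b=0\<and>c=0)" "a^2-a*b+b^2=c^2" "a \<le> b" "gcd (gcd a b) c = 1"
    using assms(2) unfolding v P_iff by auto
  have p: "0 \<le> a*a" "0 \<le> a*b" "0 \<le> b*b" using h by simp_all
  consider "B = U_E" | "B = M1_E" | "B = M2_E" | "B = M3_E" using assms(1) by auto
  then show ?thesis
  proof cases
    case 1
    let ?x = "b-a" and ?y = "b" and ?z = "c"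
    have e: "B *v v = vector [?x, ?y, ?z]" unfolding 1 U_E_def v mv by simp
    show ?thesis unfolding e P_iff
    proof (intro conjI)
      show "gcd (gcd ?x ?y) ?z = 1"
      proof (rule gcd1[OF h(7)])
        show "gcd (gcd ?x ?y) ?z dvd a" by (rule lin[OF refl, where p="-1" and q=1 and r=0]) simp
        show "gcd (gcd ?x ?y) ?z dvd b" by (rule lin[OF refl, where p=0 and q=1 and r=0]) simp
        show "gcd (gcd ?x ?y) ?z dvd c" by (rule lin[OF refl, where p=0 and q=0 and r=1]) simp
      qed
      show "?x^2 - ?x * ?y + ?y^2 = ?z^2" using h(5) by algebra
      show "\<not>(?x=0\<and>?y=0\<and>?z=0)" using h(4) by arith
    qed (use h in auto)
  next
    case 2
    let ?x = "3*a-4*b+4*c" and ?y = "7*a-7*b+8*c" and ?z = "6*a-6*b+7*c"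
    have e: "B *v v = vector [?x, ?y, ?z]" unfolding 2 M1_E_def v mv by simp
    have n1: "4*b-3*a \<le> 4*c" apply (rule sqle[of _ _ "7*a*a+8*a*b"])
      subgoal using h by simp
      subgoal using h(5) by algebra
      subgoal using p by linarith
      done
    have n2: "3*b-4*a \<le> 4*c" apply (rule sqle[of _ _ "7*b*b+8*a*b"])
      subgoal using h by simp
      subgoal using h(5) by algebra
      subgoal using p by linarith
      done
    have n3: "7*b-7*a \<le> 8*c" apply (rule sqle[of _ _ "15*a*a+34*a*b+15*b*b"])
      subgoal using h by simp
      subgoal using h(5) by algebra
      subgoal using p by linarith
      done
    have n4: "6*b-6*a \<le> 7*c" apply (rule sqle[of _ _ "13*a*a+23*a*b+13*b*b"])
      subgoal using h by simp
      subgoal using h(5) by algebra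
      subgoal using p by linarith
      done
    show ?thesis unfolding e P_iff
    proof (intro conjI)
      show "gcd (gcd ?x ?y) ?z = 1"
      proof (rule gcd1[OF h(7)])
        show "gcd (gcd ?x ?y) ?z dvd a" by (rule lin[OF refl, where p="-1" and q=4 and r="-4"]) simp
        show "gcd (gcd ?x ?y) ?z dvd b" by (rule lin[OF refl, where p="-1" and q="-3" and r=4]) simp
        show "gcd (gcd ?x ?y) ?z dvd c" by (rule lin[OF refl, where p=0 and q="-6" and r=7]) simp
      qed
      show "?x^2 - ?x * ?y + ?y^2 = ?z^2" using h(5) by algebra
      show "\<not>(?x=0\<and>?y=0\<and>?z=0)" using h(4) by arith
    qed (use h n1 n2 n3 n4 in auto)
  next
    case 3
    let ?x = "-4*a+3*b+4*c" and ?y = "-7*a+7*b+8*c" and ?z = "-6*a+6*b+7*c"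
    have e: "B *v v = vector [?x, ?y, ?z]" unfolding 3 M2_E_def v mv by simp
    have n1: "4*a-3*b \<le> 4*c" apply (rule sqle[of _ _ "7*b*b+8*a*b"])
      subgoal using h by simp
      subgoal using h(5) by algebra
      subgoal using p by linarith
      done
    show ?thesis unfolding e P_iff
    proof (intro conjI)
      show "gcd (gcd ?x ?y) ?z = 1"
      proof (rule gcd1[OF h(7)])
        show "gcd (gcd ?x ?y) ?z dvd a" by (rule lin[OF refl, where p="-1" and q="-3" and r=4]) simp
        show "gcd (gcd ?x ?y) ?z dvd b" by (rule lin[OF refl, where p="-1" and q=4 and r="-4"]) simp
        show "gcd (gcd ?x ?y) ?z dvd c" by (rule lin[OF refl, where p=0 and q="-6" and r=7]) simp
      qed
      show "?x^2 - ?x * ?y + ?y^2 = ?z^2" using h(5) by algebra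
      show "\<not>(?x=0\<and>?y=0\<and>?z=0)" using h(4) by arith
    qed (use h n1 in auto)
  next
    case 4
    let ?x = "a+3*b+4*c" and ?y = "7*b+8*c" and ?z = "6*b+7*c"
    have e: "B *v v = vector [?x, ?y, ?z]" unfolding 4 M3_E_def v mv by simp
    show ?thesis unfolding e P_iff
    proof (intro conjI)
      show "gcd (gcd ?x ?y) ?z = 1"
      proof (rule gcd1[OF h(7)])
        show "gcd (gcd ?x ?y) ?z dvd a" by (rule lin[OF refl, where p=1 and q=3 and r="-4"]) simp
        show "gcd (gcd ?x ?y) ?z dvd b" by (rule lin[OF refl, where p=0 and q=7 and r="-8"]) simp
        show "gcd (gcd ?x ?y) ?z dvd c" by (rule lin[OF refl, where p=0 and q="-6" and r=7]) simp
      qed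
      show "?x^2 - ?x * ?y + ?y^2 = ?z^2" using h(5) by algebra
      show "\<not>(?x=0\<and>?y=0\<and>?z=0)" using h(4) by arith
    qed (use h in auto)
  qed
qed

theorem lemma6p1:
  assumes "M \<in> G_E" and "v \<in> primitive_eisenstein_triples"
  shows "M *v v \<in> primitive_eisenstein_triples"
  using assms
proof (induction M arbitrary: v rule: G_E.induct)
  case id_in
  then show ?case by simp
next
  case (mult_in A B)
  then show ?case by (simp add: matrix_vector_mul_assoc[symmetric] gen_ok)
qed

end
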